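(* Let $n\ge2$ be an integer, $t\in(0,1/2]$ and $\lambda>0$. Then $$\big(t+(1-t)\lambda^{1-n}\big)\big(t+(1-t)\lambda\big)^{n-1}-1\ge\frac{t}{8}\log^2(\lambda).$$ *)

theory Defs
  imports Complex_Main
begin

end

theory Submission
  imports Defs "HOL-Analysis.Analysis"
begin

lemma convex_pow_nonneg: "convex_on {0::real..} (\<lambda>x. x^n)"
proof (intro f''_ge0_imp_convex)
  show "((\<lambda>x. x ^ n) has_real_derivative of_nat n * x^(n-1)) (at x)" for x
    by (rule derivative_eq_intros | simp)+
  show "((\<lambda>x. of_nat n * x^(n-1)) has_real_derivative of_nat n * of_nat (n-1) * x^(n-2)) (at x)" for x
    by (rule derivative_eq_intros | simp add: eval_nat_numeral)+
  show "\<And>x. x \<in> {0::real..} \<Longrightarrow> 0 \<le> real n * real (n - 1) * x ^ (n - 2)"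
    by auto
qed auto

lemma ln_sq_bound:
  fixes l :: real assumes "l > 0"
  shows "(ln l)^2 \<le> l + 1/l - 2"
proof -
  define y where "y = ln l / 2"
  have e: "exp y * exp y = l" using assms
    by (simp add: y_def flip: exp_add)
  have "\<bar>y\<bar> \<le> \<bar>(exp y - inverse (exp y)) / 2\<bar>" by (rule real_le_abs_sinh)
  hence "y^2 \<le> ((exp y - inverse (exp y)) / 2)^2"
    by (metis abs_ge_zero power2_abs power_mono)
  also have "\<dots> = (exp y * exp y + 1/(exp y * exp y) - 2)/4"
    by (simp add: field_simps power2_eq_square)
  finally have "y^2 \<le> (l + 1/l - 2)/4" using e by simp
  thus ?thesis by (simp add: y_def power_divide)
qed

theorem mainTheorem16:
  fixes n :: nat and t l :: real
  assumes "n \<ge> 2" and "0 < t" and "t \<le> 1/2" and "l > 0"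
  shows "(t + (1 - t) * l powr (1 - real n)) * (t + (1 - t) * l) ^ (n - 1) - 1
           \<ge> t / 8 * (ln l)^2"
proof -
  define m where "m = n - 1"
  define A where "A = t + (1 - t) * l"
  define q where "q = A / l"
  have Apos: "A > 0" using assms by (simp add: A_def add_pos_nonneg)
  have qpos: "q > 0" using Apos assms by (simp add: q_def)
  have rn: "1 - real n = - real m" using assms by (simp add: m_def of_nat_diff)
  have "l powr (1 - real n) = inverse (l ^ m)"
    using assms by (simp add: rn powr_minus powr_realpow)
  hence LHS: "(t + (1 - t) * l powr (1 - real n)) * A ^ m = t * A^m + (1-t) * q^m"
    using assms by (simp add: q_def power_divide field_simps)
  define c where "c = t * (1 - t) * (l + 1/l - 2)"
  have lin: "t * A + (1 - t) * q = 1 + c"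
  proof -
    have "t * A + (1 - t) * q = t * A + (1 - t) * (t / l) + (1 - t) * (1 - t)"
    proof -
      have "q = t / l + (1 - t)" using assms by (simp add: q_def A_def add_divide_distrib)
      thus ?thesis by (simp add: distrib_left)
    qed
    also have "\<dots> = 1 + c"
    proof -
      have "\<And>w. t * (t + (1 - t) * l) + (1 - t) * (t * w) + (1 - t) * (1 - t) = 1 + t * (1 - t) * (l + w - 2)"
        by algebra
      from this[of "1/l"] show ?thesis by (simp add: A_def c_def)
    qed
    finally show ?thesis .
  qed
  have lnb: "(ln l)^2 \<le> l + 1/l - 2" by (rule ln_sq_bound[OF assms(4)])
  have c0: "c \<ge> t / 8 * (ln l)^2"
  proof -
    have "t / 8 * (ln l)^2 \<le> t * (1 - t) * (ln l)^2"
      using assms by (intro mult_right_mono) auto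
    also have "\<dots> \<le> c" unfolding c_def using assms lnb
      by (intro mult_left_mono) auto
    finally show ?thesis .
  qed
  have "t/8*(ln l)^2 \<ge> 0" using assms by simp
  hence cnn: "c \<ge> 0" using c0 by linarith
  have conv: "(t * A + (1 - t) * q) ^ m \<le> t * A^m + (1-t) * q^m"
    using convex_onD[OF convex_pow_nonneg, of t q A] assms Apos qpos by (simp add: add.commute)
  have "(1 + c)^1 \<le> (1 + c) ^ m"
    by (rule power_increasing) (use cnn assms in \<open>auto simp: m_def\<close>)
  hence "1 + c \<le> t * A^m + (1-t) * q^m" using conv lin by simp
  hence fin: "(t + (1 - t) * l powr (1 - real n)) * A ^ m - 1 \<ge> t / 8 * (ln l)^2"
    using LHS c0 by linarith
  thus ?thesis unfolding A_def m_def .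
qed

end
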